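(* For every $\alpha\in(1/2,1/\sqrt2)$, the set $S_\alpha$ satisfies $\dim_H S_\alpha=-\log2/\log\alpha$. In particular, for $h\in(1,2)$ and $\alpha=2^{-1/h}$, $\dim_H S_\alpha=h$.
   Context: Let $\mathcal{R}$ be counterclockwise rotation by $\pi/2$, $\mathcal{R}(x_1,x_2)=(-x_2,x_1)$. For $\alpha\in(1/2,1/\sqrt2)$ let $F_1(x)=(1,0)+\alpha\mathcal{R}x$, $F_2(x)=(-1,0)+\alpha\mathcal{R}x$, and for a finite word $w=(w_1,\dots,w_k)\in\{1,2\}^k$ let $F_w=F_{w_1}\circ\cdots\circ F_{w_k}$ ($F_\emptyset=\mathrm{Id}$). Let $I=[-1,1]\times\{0\}$. $S_\alpha$ is the compact set $S_\alpha=\overline{\bigcup_{k\ge0}\bigcup_{w\in\{1,2\}^k}F_w(I)}$, equivalently the unique nonempty compact set with $S_\alpha=I\cup F_1(S_\alpha)\cup F_2(S_\alpha)$. *)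

theory Defs
  imports "HOL-Analysis.Analysis"
begin

definition hausdorff_pre :: "real \<Rightarrow> real \<Rightarrow> 'a::metric_space set \<Rightarrow> ennreal" where
  "hausdorff_pre s \<delta> A =
     (INF U \<in> {U :: nat \<Rightarrow> 'a set. A \<subseteq> (\<Union>i. U i) \<and>
                  (\<forall>i. bounded (U i) \<and> diameter (U i) \<le> \<delta>)}.
        (\<Sum>i. ennreal (diameter (U i) powr s)))"

definition hausdorff_measure :: "real \<Rightarrow> 'a::metric_space set \<Rightarrow> ennreal" where
  "hausdorff_measure s A = (SUP \<delta> \<in> {0<..}. hausdorff_pre s \<delta> A)"

definition hausdorff_dim :: "'a::metric_space set \<Rightarrow> real" where
  "hausdorff_dim A = Inf {s::real. 0 \<le> s \<and> hausdorff_measure s A = 0}"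

definition rot :: "real \<times> real \<Rightarrow> real \<times> real" where
  "rot x = (- snd x, fst x)"

definition Fmap :: "real \<Rightarrow> nat \<Rightarrow> real \<times> real \<Rightarrow> real \<times> real" where
  "Fmap \<alpha> j x = (if j = 1 then (1, 0) else (-1, 0)) + \<alpha> *\<^sub>R rot x"

fun Fword :: "real \<Rightarrow> nat list \<Rightarrow> real \<times> real \<Rightarrow> real \<times> real" where
  "Fword \<alpha> [] = id"
| "Fword \<alpha> (j # w) = Fmap \<alpha> j \<circ> Fword \<alpha> w"

definition Iseg :: "(real \<times> real) set" where
  "Iseg = {(t, 0) | t. -1 \<le> t \<and> t \<le> 1}"

definition S :: "real \<Rightarrow> (real \<times> real) set" where
  "S \<alpha> = closure (\<Union>w \<in> lists {1, 2}. Fword \<alpha> w ` Iseg)"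

end

theory Submission
  imports Defs "HOL-Real_Asymp.Real_Asymp"
begin


lemma rot_diff: "rot x - rot y = rot (x - y)"
  by (simp add: rot_def prod_eq_iff)

lemma norm_rot: "norm (rot x) = norm x"
  by (cases x) (simp add: rot_def norm_Pair power2_eq_square add.commute)

lemma Fmap_dist: "dist (Fmap a j x) (Fmap a j y) = \<bar>a\<bar> * dist x y"
proof -
  have "Fmap a j x - Fmap a j y = a *\<^sub>R (rot x - rot y)"
    by (simp add: Fmap_def scaleR_diff_right)
  then show ?thesis by (simp add: dist_norm rot_diff norm_rot)
qed

lemma Fword_dist: "dist (Fword a w x) (Fword a w y) = \<bar>a\<bar> ^ length w * dist x y"
  by (induction w arbitrary: x y) (simp_all add: Fmap_dist)

lemma Fword_append: "Fword a (u @ v) = Fword a u \<circ> Fword a v"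
  by (induction u) auto

lemma continuous_Fmap: "continuous_on UNIV (Fmap a j)"
  unfolding Fmap_def rot_def by (intro continuous_intros)

lemma continuous_Fword: "continuous_on UNIV (Fword a w)"
proof (induction w)
  case (Cons j w)
  have "continuous_on UNIV (Fmap a j \<circ> Fword a w)"
    by (rule continuous_on_compose[OF Cons]) (auto intro: continuous_on_subset[OF continuous_Fmap])
  then show ?case by simp
qed simp

lemma compact_Fword: "compact K \<Longrightarrow> compact (Fword a w ` K)"
  by (meson compact_continuous_image continuous_Fword continuous_on_subset subset_UNIV)

lemma diam_Fword:
  assumes "bounded K"
  shows "diameter (Fword a w ` K) \<le> \<bar>a\<bar> ^ length w * diameter K"
proof (rule diameter_le)
  show "Fword a w ` K \<noteq> {} \<or> 0 \<le> \<bar>a\<bar> ^ length w * diameter K"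
    by (simp add: diameter_ge_0)
  fix x y assume "x \<in> Fword a w ` K" "y \<in> Fword a w ` K"
  then obtain p q where "p \<in> K" "q \<in> K" "x = Fword a w p" "y = Fword a w q" by auto
  then show "norm (x - y) \<le> \<bar>a\<bar> ^ length w * diameter K"
    using Fword_dist[of a w p q] diameter_bounded_bound[OF assms, of p q]
    by (simp add: dist_norm mult_left_mono)
qed



lemma hpre_finite_cover:
  fixes f :: "'i \<Rightarrow> 'a::metric_space set"
  assumes J: "finite J" and cov: "A \<subseteq> (\<Union>j\<in>J. f j)"
    and b: "\<And>j. j \<in> J \<Longrightarrow> bounded (f j) \<and> diameter (f j) \<le> \<delta>" and d: "0 \<le> \<delta>"
  shows "hausdorff_pre s \<delta> A \<le> ennreal (\<Sum>j\<in>J. diameter (f j) powr s)"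
proof -
  obtain e where e: "bij_betw e {0..<card J} J" using ex_bij_betw_nat_finite[OF J] by blast
  define U where "U i = (if i < card J then f (e i) else {})" for i
  have mem: "U \<in> {U. A \<subseteq> (\<Union>i. U i) \<and> (\<forall>i. bounded (U i) \<and> diameter (U i) \<le> \<delta>)}"
  proof safe
    fix x assume "x \<in> A"
    then obtain j where "j \<in> J" "x \<in> f j" using cov by auto
    then obtain i where "i < card J" "e i = j" using e unfolding bij_betw_def by (metis atLeastLessThan_iff imageE)
    then show "x \<in> (\<Union>i. U i)" using \<open>x \<in> f j\<close> by (auto simp: U_def)
  next
    fix i show "bounded (U i)" "diameter (U i) \<le> \<delta>"
    proof -
      have "i < card J \<Longrightarrow> e i \<in> J" using e by (auto simp: bij_betw_def)
      then show "bounded (U i)" "diameter (U i) \<le> \<delta>" using b d by (auto simp: U_def)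
    qed
  qed
  have "hausdorff_pre s \<delta> A \<le> (\<Sum>i. ennreal (diameter (U i) powr s))"
    unfolding hausdorff_pre_def by (rule INF_lower[OF mem])
  also have "\<dots> = (\<Sum>i\<in>{0..<card J}. ennreal (diameter (U i) powr s))"
    by (rule suminf_finite) (auto simp: U_def)
  also have "\<dots> = ennreal (\<Sum>i\<in>{0..<card J}. diameter (U i) powr s)"
    by (rule sum_ennreal) simp
  also have "(\<Sum>i\<in>{0..<card J}. diameter (U i) powr s) = (\<Sum>i\<in>{0..<card J}. diameter (f (e i)) powr s)"
    by (rule sum.cong) (auto simp: U_def)
  also have "\<dots> = (\<Sum>j\<in>J. diameter (f j) powr s)"
    using sum.reindex_bij_betw[OF e, of "\<lambda>j. diameter (f j) powr s"] by simp
  finally show ?thesis .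
qed

lemma hpre_antimono:
  assumes "\<delta> \<le> \<delta>'"
  shows "hausdorff_pre s \<delta>' A \<le> hausdorff_pre s \<delta> A"
  unfolding hausdorff_pre_def
  by (rule INF_superset_mono) (use assms order_trans in blast)+

lemma hmeasure_zero_iff: "hausdorff_measure s A = 0 \<longleftrightarrow> (\<forall>\<delta>>0. hausdorff_pre s \<delta> A = 0)"
  unfolding hausdorff_measure_def by (auto simp: bot_ennreal[symmetric])



lemma hmeasure_zero_mono:
  fixes A :: "'a::metric_space set"
  assumes "hausdorff_measure s A = 0" "s \<le> t"
  shows "hausdorff_measure t A = 0"
  unfolding hmeasure_zero_iff
proof (intro allI impI)
  fix \<delta> :: real assume "0 < \<delta>"
  define d where "d = min \<delta> 1"
  have d: "0 < d" "d \<le> 1" "d \<le> \<delta>" using \<open>0 < \<delta>\<close> by (auto simp: d_def)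
  have "hausdorff_pre t \<delta> A \<le> hausdorff_pre t d A" by (rule hpre_antimono[OF d(3)])
  also have "\<dots> \<le> hausdorff_pre s d A"
    unfolding hausdorff_pre_def
  proof (rule INF_mono)
    fix U :: "nat \<Rightarrow> 'a set" assume U: "U \<in> {U. A \<subseteq> (\<Union>i. U i) \<and> (\<forall>i. bounded (U i) \<and> diameter (U i) \<le> d)}"
    have "(\<Sum>i. ennreal (diameter (U i) powr t)) \<le> (\<Sum>i. ennreal (diameter (U i) powr s))"
    proof (rule suminf_le)
      fix i
      have "diameter (U i) \<le> d" using U by blast
      moreover have "bounded (U i)" using U by blast
      ultimately have "0 \<le> diameter (U i)" "diameter (U i) \<le> 1" using d by (auto simp: diameter_ge_0)
      then show "ennreal (diameter (U i) powr t) \<le> ennreal (diameter (U i) powr s)"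
        using assms(2) by (intro ennreal_leI powr_mono') auto
    qed (rule summableI)+
    then show "\<exists>m\<in>{U. A \<subseteq> (\<Union>i. U i) \<and> (\<forall>i. bounded (U i) \<and> diameter (U i) \<le> d)}.
       (\<Sum>i. ennreal (diameter (m i) powr t)) \<le> (\<Sum>i. ennreal (diameter (U i) powr s))"
      using U by blast
  qed
  also have "\<dots> = 0" using assms(1) d(1) unfolding hmeasure_zero_iff by blast
  finally show "hausdorff_pre t \<delta> A = 0" by simp
qed

lemma realpow_powr: "0 < (x::real) \<Longrightarrow> (x ^ n) powr s = (x powr s) ^ n"
proof -
  assume x: "0 < x"
  have "(x ^ n) powr s = (x powr real n) powr s" using x by (simp add: powr_realpow)
  also have "\<dots> = (x powr s) powr real n" by (rule powr_powr_swap)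
  also have "\<dots> = (x powr s) ^ n" using x by (simp add: powr_realpow)
  finally show ?thesis .
qed



lemma Fmap_ball:
  assumes a: "0 \<le> a" "a < 1" and x: "norm x \<le> 1 / (1 - a)"
  shows "norm (Fmap a j x) \<le> 1 / (1 - a)"
proof -
  have c: "norm (if j = 1 then (1::real, 0::real) else (-1, 0)) = 1" by (simp add: norm_Pair)
  have "norm (Fmap a j x) \<le> 1 + a * norm x"
    unfolding Fmap_def using norm_triangle_ineq[of "if j = 1 then (1::real, 0::real) else (-1, 0)" "a *\<^sub>R rot x"] c a
    by (simp add: norm_rot)
  also have "\<dots> \<le> 1 + a * (1 / (1 - a))" using mult_left_mono[OF x a(1)] by simp
  also have "\<dots> = 1 / (1 - a)" using a by (simp add: field_simps)
  finally show ?thesis .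
qed

lemma Fword_ball:
  assumes a: "0 \<le> a" "a < 1" and x: "norm x \<le> 1 / (1 - a)"
  shows "norm (Fword a w x) \<le> 1 / (1 - a)"
  using x by (induction w) (auto intro: Fmap_ball[OF a])

lemma norm_t0: "norm (t::real, 0::real) = \<bar>t\<bar>"
  by (simp add: norm_Pair)

lemma Iseg_ball: "0 \<le> a \<Longrightarrow> a < 1 \<Longrightarrow> p \<in> Iseg \<Longrightarrow> norm p \<le> 1 / (1 - a)"
proof -
  assume a: "0 \<le> a" "a < 1" and p: "p \<in> Iseg"
  have "1 \<le> 1 / (1 - a)" using a by (simp add: field_simps)
  moreover obtain t where "p = (t, 0)" "-1 \<le> t" "t \<le> 1" using p unfolding Iseg_def by blast
  then have "norm p \<le> 1" by (simp add: norm_t0)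
  ultimately show ?thesis by linarith
qed

lemma cover_Iseg:
  assumes "0 < N" "p \<in> Iseg"
  shows "\<exists>j<N. p \<in> (\<lambda>t. (t, 0::real)) ` {-1 + 2 * real j / real N .. -1 + 2 * (real j + 1) / real N}"
proof -
  obtain t where t: "p = (t, 0)" "-1 \<le> t" "t \<le> 1" using assms(2) by (auto simp: Iseg_def)
  define k where "k = nat \<lfloor>(t + 1) * real N / 2\<rfloor>"
  have N: "real N > 0" using assms by simp
  have y0: "0 \<le> (t + 1) * real N / 2" using t N by simp
  have kf: "real k = of_int \<lfloor>(t + 1) * real N / 2\<rfloor>" using y0 unfolding k_def by simp
  have k1: "real k \<le> (t + 1) * real N / 2" unfolding kf by (rule of_int_floor_le)
  have k2: "(t + 1) * real N / 2 < real k + 1" using kf real_of_int_floor_add_one_gt by simp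
  show ?thesis
  proof (cases "k < N")
    case True
    have "-1 + 2 * real k / real N \<le> t" using k1 N by (simp add: field_simps)
    moreover have "t \<le> -1 + 2 * (real k + 1) / real N" using k2 N by (simp add: field_simps)
    ultimately have "p \<in> (\<lambda>t. (t, 0::real)) ` {-1 + 2 * real k / real N .. -1 + 2 * (real k + 1) / real N}"
      unfolding t(1) by (intro imageI) simp
    then show ?thesis using True by (intro exI[of _ k] conjI)
  next
    case False
    then have "real N \<le> real k" by simp
    then have "real N \<le> (t + 1) * real N / 2" using k1 by linarith
    then have "2 * 1 * real N \<le> (t + 1) * real N" by simp
    then have "2 \<le> t + 1" using N by (simp add: mult_le_cancel_right)
    then have "t = 1" using t by simp
    moreover have "-1 + 2 * real (N - 1) / real N \<le> 1" "1 \<le> -1 + 2 * (real (N - 1) + 1) / real N"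
      using N assms(1) by (auto simp: field_simps of_nat_diff)
    ultimately have "p \<in> (\<lambda>t. (t, 0::real)) ` {-1 + 2 * real (N - 1) / real N .. -1 + 2 * (real (N - 1) + 1) / real N}"
      unfolding t(1) by (intro imageI) simp
    moreover have "N - 1 < N" using assms(1) by simp
    ultimately show ?thesis by (intro exI[of _ "N - 1"] conjI)
  qed
qed



lemma upper_bound:
  assumes a: "0 < a" "a < 1" and s: "1 < s" and as: "a powr s < 1/2"
  shows "hausdorff_measure s (S a) = 0"
  unfolding hmeasure_zero_iff
proof (intro allI impI)
  fix \<delta> :: real assume "0 < \<delta>"
  define r where "r = 1 / (1 - a)"
  have r: "1 \<le> r" using a by (simp add: r_def field_simps)
  define B where "B = cball (0::real\<times>real) r"
  have FB: "Fword a w x \<in> B" if "x \<in> B" for w x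
    using Fword_ball[of a x w] that a unfolding B_def r_def by auto
  have IB: "Iseg \<subseteq> B" using Iseg_ball[of a] a unfolding B_def r_def by auto
  have dB: "diameter B = 2 * r" using r by (simp add: B_def)
  show "hausdorff_pre s \<delta> (S a) = 0"
  proof -
    have "hausdorff_pre s \<delta> (S a) \<le> 0 + ennreal e" if e: "0 < e" for e
    proof -
      have L1: "(\<lambda>n. 2 ^ n * (a ^ n * (2 * r)) powr s) \<longlonglongrightarrow> 0"
      proof -
        have eq: "2 ^ n * (a ^ n * (2 * r)) powr s = (2 * a powr s) ^ n * (2 * r) powr s" for n
          using a r by (simp add: powr_mult realpow_powr power_mult_distrib)
        have "\<bar>2 * a powr s\<bar> < 1" using as by simp
        then have "(\<lambda>n. (2 * a powr s) ^ n * (2 * r) powr s) \<longlonglongrightarrow> 0 * (2 * r) powr s"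
          by (intro tendsto_mult LIMSEQ_power_zero) auto
        then show ?thesis by (simp add: eq)
      qed
      have L2: "(\<lambda>n. a ^ n * (2 * r)) \<longlonglongrightarrow> 0"
        using a by (intro tendsto_mult_left_zero LIMSEQ_power_zero) auto
      have "\<forall>\<^sub>F n in sequentially. 2 ^ n * (a ^ n * (2 * r)) powr s < e / 2 \<and> a ^ n * (2 * r) < \<delta>"
        by (intro eventually_conj order_tendstoD(2)[OF L1] order_tendstoD(2)[OF L2]) (use e \<open>0 < \<delta>\<close> in auto)
      then obtain M where "\<forall>n\<ge>M. 2 ^ n * (a ^ n * (2 * r)) powr s < e / 2 \<and> a ^ n * (2 * r) < \<delta>"
        unfolding eventually_sequentially by blast
      then have n1: "2 ^ M * (a ^ M * (2 * r)) powr s < e / 2" and n2: "a ^ M * (2 * r) < \<delta>" by auto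
      define n where "n = M"
      note n1 = n1[folded n_def] and n2 = n2[folded n_def]
      define Wn where "Wn = {w::nat list. set w \<subseteq> {1,2} \<and> length w = n}"
      define Wl where "Wl = {w::nat list. set w \<subseteq> {1,2} \<and> length w < n}"
      have fWn: "finite Wn" unfolding Wn_def by (rule finite_lists_length_eq) simp
      have fWl: "finite Wl" unfolding Wl_def
        by (rule finite_subset[OF _ finite_lists_length_le[of "{1::nat,2}" n]]) auto
      have cWn: "card Wn = 2 ^ n" unfolding Wn_def using card_lists_length_eq[of "{1::nat,2}" n] by (simp add: numeral_2_eq_2)
      define C where "C = real (card Wl)"
      have L3: "(\<lambda>N::nat. C * real N * (2 / real N) powr s) \<longlonglongrightarrow> 0"
        using s by real_asymp
      have L4: "(\<lambda>N::nat. 2 / real N) \<longlonglongrightarrow> 0" by real_asymp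
      have "\<forall>\<^sub>F N in sequentially. C * real N * (2 / real N) powr s < e / 2 \<and> 2 / real N < \<delta> \<and> 0 < N"
        by (intro eventually_conj order_tendstoD(2)[OF L3] order_tendstoD(2)[OF L4] eventually_gt_at_top)
           (use e \<open>0 < \<delta>\<close> in auto)
      then obtain M' where "\<forall>N\<ge>M'. C * real N * (2 / real N) powr s < e / 2 \<and> 2 / real N < \<delta> \<and> 0 < N"
        unfolding eventually_sequentially by blast
      then have N1: "C * real M' * (2 / real M') powr s < e / 2" and N2: "2 / real M' < \<delta>" and N0: "0 < M'" by auto
      define N where "N = M'"
      note N1 = N1[folded N_def] and N2 = N2[folded N_def] and N0 = N0[folded N_def]
      define P where "P j = (\<lambda>t. (t, 0::real)) ` {-1 + 2 * real j / real N .. -1 + 2 * (real j + 1) / real N}" for j :: nat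
      have cP: "compact (P j)" for j unfolding P_def
        by (intro compact_continuous_image continuous_intros) auto
      have dP: "diameter (P j) \<le> 2 / real N" for j
        unfolding P_def
      proof (rule diameter_le)
        fix x y assume "x \<in> (\<lambda>t. (t, 0::real)) ` {-1 + 2 * real j / real N .. -1 + 2 * (real j + 1) / real N}"
            "y \<in> (\<lambda>t. (t, 0::real)) ` {-1 + 2 * real j / real N .. -1 + 2 * (real j + 1) / real N}"
        then obtain t u where "x = (t,0)" "y = (u,0)" "-1 + 2 * real j / real N \<le> t" "t \<le> -1 + 2 * (real j + 1) / real N"
          "-1 + 2 * real j / real N \<le> u" "u \<le> -1 + 2 * (real j + 1) / real N" by auto
        moreover have "-1 + 2 * (real j + 1) / real N - (-1 + 2 * real j / real N) = 2 / real N"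
          using N0 by (simp add: field_simps)
        ultimately show "norm (x - y) \<le> 2 / real N" by (simp add: norm_Pair abs_le_iff)
      qed (use N0 in auto)
      define f where "f = (\<lambda>(w, j). if length w = n then Fword a w ` B else Fword a w ` P j)"
      define J1 where "J1 = (\<lambda>w. (w, 0::nat)) ` Wn"
      define J2 where "J2 = Wl \<times> {..<N}"
      define J where "J = J1 \<union> J2"
      have fJ: "finite J" unfolding J_def J1_def J2_def using fWn fWl by auto
      have cf: "compact (f x)" for x
        unfolding f_def using cP by (auto simp: B_def split: prod.splits intro!: compact_Fword)
      have df1: "diameter (f x) \<le> a ^ n * (2 * r)" if x1: "x \<in> J1" for x
      proof -
        obtain w where "x = (w, 0)" "w \<in> Wn" using x1 by (auto simp: J1_def)
        then show ?thesis using diam_Fword[of B a w] a r by (simp add: f_def Wn_def dB B_def)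
      qed
      have df2: "diameter (f x) \<le> 2 / real N" if x2: "x \<in> J2" for x
      proof -
        obtain w j where w: "x = (w, j)" "w \<in> Wl" using x2 by (auto simp: J2_def)
        then have "diameter (f x) \<le> a ^ length w * diameter (P j)"
          using diam_Fword[of "P j" a w] a compact_imp_bounded[OF cP] by (simp add: f_def Wl_def)
        also have "\<dots> \<le> 1 * (2 / real N)"
          using a dP[of j] diameter_ge_0[OF compact_imp_bounded[OF cP[of j]]] by (intro mult_mono power_le_one) (auto simp: diameter_ge_0)
        finally show ?thesis by simp
      qed
      have cov: "S a \<subseteq> (\<Union>x\<in>J. f x)"
        unfolding S_def
      proof (rule closure_minimal)
        show "closed (\<Union>x\<in>J. f x)" using fJ cf by (intro closed_UN) (auto intro: compact_imp_closed)
        show "(\<Union>w\<in>lists {1, 2}. Fword a w ` Iseg) \<subseteq> (\<Union>x\<in>J. f x)"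
        proof (rule subsetI)
          fix y assume "y \<in> (\<Union>w\<in>lists {1, 2}. Fword a w ` Iseg)"
          then obtain u p where u: "u \<in> lists {1::nat, 2}" and p: "p \<in> Iseg" and y: "y = Fword a u p" by blast
          have "Fword a u p \<in> (\<Union>x\<in>J. f x)"
          proof (cases "n \<le> length u")
            case True
            have "u = take n u @ drop n u" by simp
            then have "Fword a u p = Fword a (take n u) (Fword a (drop n u) p)"
              by (metis Fword_append comp_apply)
            moreover have "Fword a (drop n u) p \<in> B" by (rule FB[OF subsetD[OF IB p]])
            moreover have "(take n u, 0) \<in> J"
            proof -
              have "take n u \<in> Wn"
                using u True set_take_subset[of n u] unfolding Wn_def by auto
              then show ?thesis unfolding J_def J1_def by blast
            qed
            moreover have "length (take n u) = n" using True by simp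
            ultimately have "Fword a u p \<in> f (take n u, 0)" unfolding f_def by auto
            then show ?thesis using \<open>(take n u, 0) \<in> J\<close> by (rule UN_I[rotated])
          next
            case False
            then obtain j where "j < N" "p \<in> P j" using cover_Iseg[OF N0 p] unfolding P_def by blast
            moreover have "(u, j) \<in> J" using u False \<open>j < N\<close> unfolding J_def J2_def Wl_def by auto
            ultimately have "Fword a u p \<in> f (u, j)" using False unfolding f_def by auto
            then show ?thesis using \<open>(u, j) \<in> J\<close> by (rule UN_I[rotated])
          qed
          then show "y \<in> (\<Union>x\<in>J. f x)" using y by simp
        qed
      qed
      have dd: "0 \<le> \<delta>" using \<open>0 < \<delta>\<close> by simp
      have bnd: "bounded (f x) \<and> diameter (f x) \<le> \<delta>" if "x \<in> J" for x
      proof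
        show "bounded (f x)" using cf compact_imp_bounded by blast
        show "diameter (f x) \<le> \<delta>"
        proof (cases "x \<in> J1")
          case True then show ?thesis using df1[OF True] n2 by linarith
        next
          case False then have "x \<in> J2" using that unfolding J_def by blast
          then show ?thesis using df2[of x] N2 by linarith
        qed
      qed
      have hp: "hausdorff_pre s \<delta> (S a) \<le> ennreal (\<Sum>x\<in>J. diameter (f x) powr s)"
        by (rule hpre_finite_cover[OF fJ cov bnd dd])
      have sJ: "(\<Sum>x\<in>J. diameter (f x) powr s) = (\<Sum>x\<in>J1. diameter (f x) powr s) + (\<Sum>x\<in>J2. diameter (f x) powr s)"
        unfolding J_def
        by (rule sum.union_disjoint) (use fWn fWl in \<open>auto simp: J1_def J2_def Wn_def Wl_def\<close>)
      have bf: "bounded (f x)" for x using cf compact_imp_bounded by blast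
      have t1: "diameter (f x) powr s \<le> (a ^ n * (2 * r)) powr s" if "x \<in> J1" for x
        using df1[OF that] s diameter_ge_0[OF bf] by (intro powr_mono2) auto
      have t2: "diameter (f x) powr s \<le> (2 / real N) powr s" if "x \<in> J2" for x
        using df2[OF that] s diameter_ge_0[OF bf] by (intro powr_mono2) auto
      have s1a: "(\<Sum>x\<in>J1. diameter (f x) powr s) \<le> real (card J1) * (a ^ n * (2 * r)) powr s"
        by (rule sum_bounded_above) (rule t1)
      have "card J1 \<le> card Wn" unfolding J1_def by (rule card_image_le[OF fWn])
      then have "real (card J1) \<le> 2 ^ n" using cWn by (simp add: of_nat_le_iff[symmetric])
      then have s1b: "real (card J1) * (a ^ n * (2 * r)) powr s \<le> 2 ^ n * (a ^ n * (2 * r)) powr s"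
        by (rule mult_right_mono) simp
      have s2a: "(\<Sum>x\<in>J2. diameter (f x) powr s) \<le> real (card J2) * (2 / real N) powr s"
        by (rule sum_bounded_above) (rule t2)
      have cJ2: "real (card J2) = C * real N" unfolding J2_def C_def using fWl by (simp add: card_cartesian_product)
      have "(\<Sum>x\<in>J. diameter (f x) powr s) \<le> e"
      proof -
        have s2: "(\<Sum>x\<in>J2. diameter (f x) powr s) \<le> C * real N * (2 / real N) powr s"
          using s2a unfolding cJ2 .
        show ?thesis using sJ s1a s1b s2 n1 N1 by linarith
      qed
      then have "ennreal (\<Sum>x\<in>J. diameter (f x) powr s) \<le> ennreal e" by (rule ennreal_leI)
      then show ?thesis using hp by simp
    qed
    then have "hausdorff_pre s \<delta> (S a) \<le> 0" by (rule ennreal_le_epsilon)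
    then show ?thesis by simp
  qed
qed



lemma abs_suminf_geom:
  fixes f :: "nat \<Rightarrow> real"
  assumes fb: "\<And>n. \<bar>f n\<bar> \<le> c * q ^ n" and q: "0 \<le> q" "q < 1"
  shows "summable f" "\<bar>suminf f\<bar> \<le> c / (1 - q)"
proof -
  have sg: "summable (\<lambda>n. c * q ^ n)" using q by (intro summable_mult summable_geometric) simp
  show sf: "summable f" by (rule summable_comparison_test'[OF sg, of 0]) (use fb in simp)
  have sa: "summable (\<lambda>n. \<bar>f n\<bar>)" by (rule summable_rabs_comparison_test[OF _ sg]) (use fb in auto)
  have "\<bar>suminf f\<bar> \<le> (\<Sum>n. \<bar>f n\<bar>)" by (rule summable_rabs[OF sa])
  also have "\<dots> \<le> (\<Sum>n. c * q ^ n)" by (rule suminf_le[OF fb sa sg])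
  also have "\<dots> = c * (1 / (1 - q))" using q by (simp add: suminf_mult suminf_geometric)
  finally show "\<bar>suminf f\<bar> \<le> c / (1 - q)" by simp
qed

definition sg :: "(nat \<Rightarrow> bool) \<Rightarrow> nat \<Rightarrow> real" where
  "sg e k = (if e k then 1 else -1)"

definition Q :: "real \<Rightarrow> (nat \<Rightarrow> real) \<Rightarrow> real" where
  "Q a t = (\<Sum>j. t j * (- (a ^ 2)) ^ j)"

definition Pc :: "real \<Rightarrow> (nat \<Rightarrow> bool) \<Rightarrow> real \<times> real" where
  "Pc a e = (Q a (\<lambda>j. sg e (2 * j)), a * Q a (\<lambda>j. sg e (2 * j + 1)))"

definition dig :: "(nat \<Rightarrow> bool) \<Rightarrow> nat \<Rightarrow> nat" where
  "dig e k = (if e k then 1 else 2)"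

definition gb :: "(nat \<Rightarrow> bool) \<Rightarrow> real" where
  "gb e = (\<Sum>k. (if e k then 1 else 0) / 2 ^ Suc k)"

lemma abs_sg: "\<bar>sg e k\<bar> = 1" by (simp add: sg_def)

lemma Q_terms:
  fixes a :: real and t :: "nat \<Rightarrow> real"
  assumes "\<And>j. \<bar>t j\<bar> \<le> 1"
  shows "\<bar>t j * (- (a ^ 2)) ^ j\<bar> \<le> 1 * (a ^ 2) ^ j"
proof -
  have "\<bar>t j * (- (a ^ 2)) ^ j\<bar> = \<bar>t j\<bar> * (a ^ 2) ^ j" by (simp add: abs_mult power_abs)
  also have "\<dots> \<le> 1 * (a ^ 2) ^ j" using assms[of j] by (intro mult_right_mono) auto
  finally show ?thesis .
qed

lemma Q_summable:
  fixes a :: real and t :: "nat \<Rightarrow> real"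
  assumes "\<And>j. \<bar>t j\<bar> \<le> 1" "a ^ 2 < 1"
  shows "summable (\<lambda>j. t j * (- (a ^ 2)) ^ j)" "\<bar>Q a t\<bar> \<le> 1 / (1 - a ^ 2)"
proof -
  have tb: "\<And>n. \<bar>t n * (- (a ^ 2)) ^ n\<bar> \<le> 1 * (a ^ 2) ^ n" by (rule Q_terms[OF assms(1)])
  have q: "0 \<le> a ^ 2" "a ^ 2 < 1" using assms(2) by auto
  show "summable (\<lambda>j. t j * (- (a ^ 2)) ^ j)" by (rule abs_suminf_geom(1)[OF tb q])
  show "\<bar>Q a t\<bar> \<le> 1 / (1 - a ^ 2)" unfolding Q_def by (rule abs_suminf_geom(2)[OF tb q])
qed

lemma Q_sep:
  fixes a :: real and t t' :: "nat \<Rightarrow> real"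
  assumes t: "\<And>i. \<bar>t i\<bar> \<le> 1" and t': "\<And>i. \<bar>t' i\<bar> \<le> 1" and eq: "\<And>i. i < j \<Longrightarrow> t i = t' i"
    and d: "\<bar>t j - t' j\<bar> = 2" and a: "a ^ 2 < 1"
  shows "(2 - 2 * a ^ 2 / (1 - a ^ 2)) * (a ^ 2) ^ j \<le> \<bar>Q a t - Q a t'\<bar>"
proof -
  define q where "q = a ^ 2"
  have q: "0 \<le> q" "q < 1" using a by (auto simp: q_def)
  define f where "f i = (t i - t' i) * (- q) ^ i" for i
  have fb: "\<bar>f i\<bar> \<le> 2 * q ^ i" for i
  proof -
    have "\<bar>t i - t' i\<bar> \<le> 2" using t[of i] t'[of i] by linarith
    then show ?thesis unfolding f_def using q by (simp add: abs_mult power_abs mult_right_mono)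
  qed
  have sf: "summable f" using abs_suminf_geom(1)[OF fb q] .
  have "Q a t - Q a t' = suminf f"
    unfolding Q_def f_def q_def
    using suminf_diff[OF Q_summable(1)[OF t a] Q_summable(1)[OF t' a]]
    by (simp add: left_diff_distrib)
  also have "\<dots> = (\<Sum>n. f (n + j)) + (\<Sum>i<j. f i)" by (rule suminf_split_initial_segment[OF sf])
  also have "(\<Sum>i<j. f i) = 0" by (rule sum.neutral) (auto simp: f_def eq)
  finally have e1: "Q a t - Q a t' = (\<Sum>n. f (n + j))" by simp
  define g where "g n = f (n + j)" for n
  have sgg: "summable g" unfolding g_def by (rule summable_ignore_initial_segment[OF sf])
  have e2: "(\<Sum>n. g (Suc n)) = suminf g - g 0" by (rule suminf_split_head[OF sgg])
  have gb: "\<bar>g (Suc n)\<bar> \<le> (2 * q ^ Suc j) * q ^ n" for n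
    using fb[of "Suc n + j"] by (simp add: g_def power_add mult_ac)
  have tail: "\<bar>\<Sum>n. g (Suc n)\<bar> \<le> 2 * q ^ Suc j / (1 - q)" by (rule abs_suminf_geom(2)[OF gb q])
  have g0: "\<bar>g 0\<bar> = 2 * q ^ j" unfolding g_def f_def using d q by (simp add: abs_mult power_abs)
  have e3: "Q a t - Q a t' = suminf g" using e1 unfolding g_def .
  have "\<bar>Q a t - Q a t'\<bar> = \<bar>g 0 + (\<Sum>n. g (Suc n))\<bar>" using e3 e2 by simp
  moreover have "2 * q ^ Suc j / (1 - q) = (2 * q / (1 - q)) * q ^ j" by simp
  ultimately have "\<bar>Q a t - Q a t'\<bar> \<ge> 2 * q ^ j - (2 * q / (1 - q)) * q ^ j"
    using tail g0 by linarith
  then show ?thesis by (simp add: q_def left_diff_distrib)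
qed



lemma Fmap_comp:
  "Fmap a j x = ((if j = 1 then 1 else -1) - a * snd x, a * fst x)"
  by (simp add: Fmap_def rot_def)

lemma sg_summable: "a ^ 2 < 1 \<Longrightarrow> summable (\<lambda>j. sg e (f j) * (- ((a::real) ^ 2)) ^ j)"
  by (rule Q_summable(1)) (simp_all add: abs_sg)

lemma Pc_shift:
  fixes a :: real
  assumes a: "a ^ 2 < 1"
  shows "Pc a e = Fmap a (dig e 0) (Pc a (\<lambda>k. e (Suc k)))"
proof -
  define b where "b = - (a ^ 2)"
  have s1: "summable (\<lambda>j. sg e (2 * j) * b ^ j)" unfolding b_def by (rule sg_summable[OF a])
  have s2: "summable (\<lambda>j. sg e (2 * Suc j) * b ^ j)" unfolding b_def by (rule sg_summable[OF a])
  have "(\<Sum>j. sg e (2 * Suc j) * b ^ Suc j) = (\<Sum>j. sg e (2 * j) * b ^ j) - sg e 0"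
    using suminf_split_head[OF s1] by simp
  moreover have "(\<Sum>j. sg e (2 * Suc j) * b ^ Suc j) = b * (\<Sum>j. sg e (2 * Suc j) * b ^ j)"
    using suminf_mult[OF s2, of b] by (simp add: mult_ac)
  ultimately have h: "Q a (\<lambda>j. sg e (2 * j)) = sg e 0 + b * Q a (\<lambda>j. sg (\<lambda>k. e (Suc k)) (2 * j + 1))"
    unfolding Q_def b_def by (simp add: sg_def)
  show ?thesis
    unfolding Fmap_comp Pc_def prod_eq_iff
    using h by (simp add: b_def dig_def sg_def power2_eq_square)
qed



lemma Pc_Fword:
  fixes a :: real
  assumes a: "a ^ 2 < 1"
  shows "Pc a e = Fword a (map (dig e) [0..<n]) (Pc a (\<lambda>k. e (k + n)))"
proof (induction n)
  case 0 then show ?case by simp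
next
  case (Suc n)
  have "Pc a (\<lambda>k. e (k + n)) = Fmap a (dig (\<lambda>k. e (k + n)) 0) (Pc a (\<lambda>k. e (Suc k + n)))"
    by (rule Pc_shift[OF a])
  also have "dig (\<lambda>k. e (k + n)) 0 = dig e n" by (simp add: dig_def)
  also have "(\<lambda>k. e (Suc k + n)) = (\<lambda>k. e (k + Suc n))" by simp
  finally have h: "Pc a (\<lambda>k. e (k + n)) = Fmap a (dig e n) (Pc a (\<lambda>k. e (k + Suc n)))" .
  have "Fword a (map (dig e) [0..<Suc n]) = Fword a (map (dig e) [0..<n] @ [dig e n])" by simp
  also have "\<dots> = Fword a (map (dig e) [0..<n]) \<circ> Fmap a (dig e n)" by (simp add: Fword_append)
  finally show ?case using Suc h by simp
qed

lemma Pc_norm: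
  fixes a :: real
  assumes a: "0 \<le> a" "a \<le> 1" "a ^ 2 < 1"
  shows "norm (Pc a e) \<le> 2 / (1 - a ^ 2)"
proof -
  have q1: "\<bar>Q a (\<lambda>j. sg e (2 * j))\<bar> \<le> 1 / (1 - a ^ 2)" by (rule Q_summable(2)) (simp_all add: abs_sg a)
  have q2: "\<bar>Q a (\<lambda>j. sg e (2 * j + 1))\<bar> \<le> 1 / (1 - a ^ 2)" by (rule Q_summable(2)) (simp_all add: abs_sg a)
  have "\<bar>a * Q a (\<lambda>j. sg e (2 * j + 1))\<bar> \<le> 1 * (1 / (1 - a ^ 2))"
    unfolding abs_mult using a q2 by (intro mult_mono) auto
  then have "norm (Pc a e) \<le> 1 / (1 - a ^ 2) + 1 / (1 - a ^ 2)"
    using norm_Pair_le[of "Q a (\<lambda>j. sg e (2 * j))" "a * Q a (\<lambda>j. sg e (2 * j + 1))"] q1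
    unfolding Pc_def by simp
  then show ?thesis by simp
qed

lemma Pc_in_S:
  fixes a :: real
  assumes a: "0 < a" "a < 1"
  shows "Pc a e \<in> S a"
proof -
  have a2: "a ^ 2 < 1" using a by (simp add: power_less_one_iff)
  define M where "M = 2 / (1 - a ^ 2)"
  have M: "norm (Pc a e') \<le> M" for e' unfolding M_def by (rule Pc_norm) (use a a2 in auto)
  show ?thesis unfolding S_def closure_approachable
  proof (intro allI impI)
    fix \<epsilon> :: real assume "0 < \<epsilon>"
    have "(\<lambda>n. a ^ n * M) \<longlonglongrightarrow> 0" using a by (intro tendsto_mult_left_zero LIMSEQ_power_zero) auto
    from order_tendstoD(2)[OF this \<open>0 < \<epsilon>\<close>] obtain n where n: "a ^ n * M < \<epsilon>"
      unfolding eventually_sequentially by blast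
    define w where "w = map (dig e) [0..<n]"
    have w: "w \<in> lists {1, 2}" unfolding w_def dig_def by auto
    have z: "(0::real, 0::real) \<in> Iseg" unfolding Iseg_def by auto
    have "dist (Fword a w (0, 0)) (Pc a e) = dist (Fword a w (0, 0)) (Fword a w (Pc a (\<lambda>k. e (k + n))))"
      using Pc_Fword[OF a2, of e n] unfolding w_def by simp
    also have "\<dots> = a ^ n * norm (Pc a (\<lambda>k. e (k + n)))"
      using a Fword_dist[of a w "(0,0)" "Pc a (\<lambda>k. e (k + n))"] by (simp add: w_def dist_norm zero_prod_def[symmetric])
    also have "\<dots> \<le> a ^ n * M" using M a by (intro mult_left_mono) auto
    finally have "dist (Fword a w (0, 0)) (Pc a e) < \<epsilon>" using n by linarith
    moreover have "Fword a w (0, 0) \<in> (\<Union>w\<in>lists {1, 2}. Fword a w ` Iseg)" using w z by blast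
    ultimately show "\<exists>y\<in>\<Union>w\<in>lists {1, 2}. Fword a w ` Iseg. dist y (Pc a e) < \<epsilon>" by blast
  qed
qed



fun rr :: "real \<Rightarrow> nat \<Rightarrow> real" where
  "rr x 0 = x"
| "rr x (Suc k) = (if 1 / 2 ^ Suc k \<le> rr x k then rr x k - 1 / 2 ^ Suc k else rr x k)"

lemma rr_bounds: "0 \<le> x \<Longrightarrow> x \<le> 1 \<Longrightarrow> 0 \<le> rr x k \<and> rr x k \<le> 1 / 2 ^ k"
proof (induction k)
  case 0 then show ?case by simp
next
  case (Suc k)
  have h: "1 / (2::real) ^ k = 2 * (1 / 2 ^ Suc k)" by simp
  show ?case using Suc h by (auto simp del: power_Suc)
qed

lemma gb_terms: "\<bar>(if e k then 1 else 0) / (2::real) ^ Suc k\<bar> \<le> (1/2) * (1/2) ^ k"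
  by (simp add: power_divide)

lemma gb_summable: "summable (\<lambda>k. (if e k then 1 else 0) / (2::real) ^ Suc k)"
  by (rule abs_suminf_geom(1)[OF gb_terms]) auto

lemma gb_surj:
  assumes "0 \<le> x" "x \<le> 1"
  shows "\<exists>e. gb e = x"
proof -
  define e where "e k = (1 / 2 ^ Suc k \<le> rr x k)" for k
  have ps: "(\<Sum>k<n. (if e k then 1 else 0) / (2::real) ^ Suc k) = x - rr x n" for n
    by (induction n) (auto simp: e_def)
  have "(\<lambda>n. rr x n) \<longlonglongrightarrow> 0"
  proof (rule Lim_null_comparison)
    show "\<forall>\<^sub>F n in sequentially. norm (rr x n) \<le> (1/2) ^ n"
      using rr_bounds[OF assms] by (simp add: power_divide)
    show "(\<lambda>n. (1/2::real) ^ n) \<longlonglongrightarrow> 0" by (rule LIMSEQ_power_zero) simp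
  qed
  then have "(\<lambda>n. x - rr x n) \<longlonglongrightarrow> x - 0" by (intro tendsto_diff tendsto_const)
  then have "(\<lambda>k. (if e k then 1 else 0) / (2::real) ^ Suc k) sums x"
    unfolding sums_def ps by simp
  then show ?thesis unfolding gb_def by (auto dest: sums_unique)
qed

lemma gb_diff:
  assumes eq: "\<And>k. k < m \<Longrightarrow> e k = e' k"
  shows "\<bar>gb e - gb e'\<bar> \<le> 1 / 2 ^ m"
proof -
  define f where "f k = ((if e k then 1 else 0) - (if e' k then 1 else 0)) / (2::real) ^ Suc k" for k
  have fb: "\<bar>f k\<bar> \<le> 1 * (1/2) ^ k" for k unfolding f_def by (auto simp: power_divide field_simps)
  have sf: "summable f" by (rule abs_suminf_geom(1)[OF fb]) auto
  have "gb e - gb e' = suminf f"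
    unfolding gb_def f_def using suminf_diff[OF gb_summable gb_summable] by (simp add: diff_divide_distrib)
  also have "\<dots> = (\<Sum>n. f (n + m)) + (\<Sum>i<m. f i)" by (rule suminf_split_initial_segment[OF sf])
  also have "(\<Sum>i<m. f i) = 0" by (rule sum.neutral) (auto simp: f_def eq)
  finally have e1: "gb e - gb e' = (\<Sum>n. f (n + m))" by simp
  have gb: "\<bar>f (n + m)\<bar> \<le> (1 / 2 ^ Suc m) * (1/2) ^ n" for n
    unfolding f_def by (auto simp: power_add power_divide mult_ac)
  have "\<bar>\<Sum>n. f (n + m)\<bar> \<le> (1 / 2 ^ Suc m) / (1 - 1/2)" by (rule abs_suminf_geom(2)[OF gb]) auto
  then show ?thesis using e1 by simp
qed



lemma sg_diff: "e k \<noteq> e' k \<Longrightarrow> \<bar>sg e k - sg e' k\<bar> = 2"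
  by (auto simp: sg_def)

lemma Pc_sep:
  fixes a :: real
  assumes a: "0 < a" "a ^ 2 < 1" and eq: "\<And>k. k < m \<Longrightarrow> e k = e' k" and ne: "e m \<noteq> e' m"
  shows "(2 - 2 * a ^ 2 / (1 - a ^ 2)) * a ^ m \<le> dist (Pc a e) (Pc a e')"
proof (cases "even m")
  case True
  then obtain j where m: "m = 2 * j" by blast
  have "(2 - 2 * a ^ 2 / (1 - a ^ 2)) * (a ^ 2) ^ j \<le> \<bar>Q a (\<lambda>i. sg e (2 * i)) - Q a (\<lambda>i. sg e' (2 * i))\<bar>"
  proof (rule Q_sep)
    show "\<bar>sg e (2 * j) - sg e' (2 * j)\<bar> = 2" using ne m sg_diff by simp
    fix i assume "i < j" then show "sg e (2 * i) = sg e' (2 * i)" using eq m by (simp add: sg_def)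
  qed (simp_all add: abs_sg a)
  also have "\<dots> \<le> dist (Pc a e) (Pc a e')"
    using dist_fst_le[of "Pc a e" "Pc a e'"] by (simp add: Pc_def dist_real_def)
  finally show ?thesis by (simp add: m power_mult)
next
  case False
  then obtain j where m: "m = 2 * j + 1" using oddE by blast
  have "(2 - 2 * a ^ 2 / (1 - a ^ 2)) * (a ^ 2) ^ j \<le> \<bar>Q a (\<lambda>i. sg e (2 * i + 1)) - Q a (\<lambda>i. sg e' (2 * i + 1))\<bar>"
  proof (rule Q_sep)
    show "\<bar>sg e (2 * j + 1) - sg e' (2 * j + 1)\<bar> = 2" using ne m sg_diff by simp
    fix i assume "i < j" then show "sg e (2 * i + 1) = sg e' (2 * i + 1)" using eq m by (simp add: sg_def)
  qed (simp_all add: abs_sg a)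
  then have "a * ((2 - 2 * a ^ 2 / (1 - a ^ 2)) * (a ^ 2) ^ j) \<le> a * \<bar>Q a (\<lambda>i. sg e (2 * i + 1)) - Q a (\<lambda>i. sg e' (2 * i + 1))\<bar>"
    using a by (intro mult_left_mono) auto
  also have "\<dots> = \<bar>snd (Pc a e) - snd (Pc a e')\<bar>" using a by (simp add: Pc_def abs_mult flip: right_diff_distrib)
  also have "\<dots> \<le> dist (Pc a e) (Pc a e')"
    using dist_snd_le[of "Pc a e" "Pc a e'"] by (simp add: dist_real_def)
  finally have h: "a * ((2 - 2 * a ^ 2 / (1 - a ^ 2)) * (a ^ 2) ^ j) \<le> dist (Pc a e) (Pc a e')" .
  have eqm: "(2 - 2 * a ^ 2 / (1 - a ^ 2)) * a ^ m = a * ((2 - 2 * a ^ 2 / (1 - a ^ 2)) * (a ^ 2) ^ j)"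
    unfolding m by (simp add: power_add power_mult)
  show ?thesis using h eqm by linarith
qed

lemma holder:
  fixes a s0 :: real
  assumes a: "0 < a" "a ^ 2 < 1/2" and s0: "0 \<le> s0" "a powr s0 = 1/2"
  shows "\<bar>gb e - gb e'\<bar> \<le> (dist (Pc a e) (Pc a e') / (2 - 2 * a ^ 2 / (1 - a ^ 2))) powr s0"
proof (cases "e = e'")
  case True then show ?thesis by simp
next
  case False
  define \<kappa> where "\<kappa> = 2 - 2 * a ^ 2 / (1 - a ^ 2)"
  have a1: "a ^ 2 < 1" using a by simp
  have "2 * a ^ 2 / (1 - a ^ 2) < 2" using a by (simp add: field_simps)
  then have k: "0 < \<kappa>" unfolding \<kappa>_def by simp
  from False obtain k0 where "e k0 \<noteq> e' k0" by blast
  define m where "m = (LEAST k. e k \<noteq> e' k)"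
  have ne: "e m \<noteq> e' m" unfolding m_def by (rule LeastI[of _ k0]) fact
  have eq: "e k = e' k" if "k < m" for k using not_less_Least[OF that[unfolded m_def]] by blast
  have sep: "\<kappa> * a ^ m \<le> dist (Pc a e) (Pc a e')" unfolding \<kappa>_def by (rule Pc_sep[of a m e e', OF a(1) a1 eq ne])
  have "\<bar>gb e - gb e'\<bar> \<le> 1 / 2 ^ m" by (rule gb_diff[OF eq])
  also have "1 / 2 ^ m = (a ^ m) powr s0"
  proof -
    have "(a ^ m) powr s0 = (a powr s0) ^ m" by (rule realpow_powr[OF a(1)])
    also have "\<dots> = (1/2) ^ m" unfolding s0(2) ..
    also have "\<dots> = 1 / 2 ^ m" by (simp add: power_divide)
    finally show ?thesis by simp
  qed
  also have "\<dots> \<le> (dist (Pc a e) (Pc a e') / \<kappa>) powr s0"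
    using sep k a s0 by (intro powr_mono2) (auto simp: field_simps)
  finally show ?thesis unfolding \<kappa>_def .
qed



lemma lower_bound:
  fixes a s0 :: real
  assumes a: "0 < a" "a < 1" "a ^ 2 < 1/2" and s0: "0 \<le> s0" "a powr s0 = 1/2"
  shows "hausdorff_measure s0 (S a) \<noteq> 0"
proof -
  define \<kappa> where "\<kappa> = 2 - 2 * a ^ 2 / (1 - a ^ 2)"
  have "2 * a ^ 2 / (1 - a ^ 2) < 2" using a by (simp add: field_simps)
  then have k: "0 < \<kappa>" unfolding \<kappa>_def by simp
  define L where "L = 1 / \<kappa> powr s0"
  have L: "0 < L" using k by (simp add: L_def)
  have hol: "\<bar>gb e - gb e'\<bar> \<le> L * dist (Pc a e) (Pc a e') powr s0" for e e'
  proof -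
    have "\<bar>gb e - gb e'\<bar> \<le> (dist (Pc a e) (Pc a e') / \<kappa>) powr s0"
      unfolding \<kappa>_def by (rule holder[OF a(1) a(3) s0])
    also have "\<dots> = L * dist (Pc a e) (Pc a e') powr s0"
      using k by (simp add: L_def powr_divide)
    finally show ?thesis .
  qed
  have pre: "ennreal (1 / (2 * L)) \<le> hausdorff_pre s0 1 (S a)"
    unfolding hausdorff_pre_def
  proof (rule INF_greatest)
    fix U :: "nat \<Rightarrow> (real \<times> real) set"
    assume "U \<in> {U. S a \<subseteq> (\<Union>i. U i) \<and> (\<forall>i. bounded (U i) \<and> diameter (U i) \<le> 1)}"
    then have cov: "S a \<subseteq> (\<Union>i. U i)" and bU: "\<And>i. bounded (U i)" by auto
    define V where "V i = gb ` {e. Pc a e \<in> U i}" for i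
    define d where "d i = L * diameter (U i) powr s0" for i
    have d0: "0 \<le> d i" for i using L by (simp add: d_def)
    have Vd: "\<bar>x - y\<bar> \<le> d i" if xy: "x \<in> V i" "y \<in> V i" for x y i
    proof -
      obtain e e' where e: "Pc a e \<in> U i" "x = gb e" and e': "Pc a e' \<in> U i" "y = gb e'"
        using xy by (auto simp: V_def)
      have "dist (Pc a e) (Pc a e') \<le> diameter (U i)" by (rule diameter_bounded_bound[OF bU e(1) e'(1)])
      then have "dist (Pc a e) (Pc a e') powr s0 \<le> diameter (U i) powr s0"
        using s0 by (intro powr_mono2) auto
      then have "L * dist (Pc a e) (Pc a e') powr s0 \<le> d i" unfolding d_def using L by simp
      then show ?thesis using hol[of e e'] e e' by simp
    qed
    define v where "v i = (SOME x. x \<in> V i)" for i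
    define W where "W i = (if V i = {} then {} else {v i - d i .. v i + d i})" for i
    have cW: "{0..1::real} \<subseteq> (\<Union>i. W i)"
    proof
      fix x :: real assume "x \<in> {0..1}"
      then obtain e where ex: "gb e = x" using gb_surj by auto
      have "Pc a e \<in> S a" by (rule Pc_in_S[OF a(1) a(2)])
      then obtain i where "Pc a e \<in> U i" using cov by auto
      then have xV: "x \<in> V i" using ex by (auto simp: V_def)
      then have ne: "V i \<noteq> {}" by auto
      have "v i \<in> V i" unfolding v_def using xV by (rule someI)
      then have "\<bar>x - v i\<bar> \<le> d i" using Vd xV by blast
      then have "x \<in> W i" using ne by (auto simp: W_def abs_le_iff)
      then show "x \<in> (\<Union>i. W i)" by blast
    qed
    have mW: "emeasure lborel (W i) \<le> ennreal (2 * L) * ennreal (diameter (U i) powr s0)" for i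
    proof -
      have "emeasure lborel (W i) \<le> ennreal (2 * d i)"
        using d0[of i] by (auto simp: W_def)
      also have "ennreal (2 * d i) = ennreal (2 * L) * ennreal (diameter (U i) powr s0)"
        unfolding d_def using L by (simp add: ennreal_mult[symmetric] mult_ac)
      finally show ?thesis .
    qed
    have sW: "range W \<subseteq> sets lborel" by (auto simp: W_def)
    have "ennreal 1 = emeasure lborel {0..1::real}" by simp
    also have "\<dots> \<le> emeasure lborel (\<Union>i. W i)" by (rule emeasure_mono[OF cW]) (use sW in auto)
    also have "\<dots> \<le> (\<Sum>i. emeasure lborel (W i))" by (rule emeasure_subadditive_countably[OF sW])
    also have "\<dots> \<le> (\<Sum>i. ennreal (2 * L) * ennreal (diameter (U i) powr s0))"
      by (rule suminf_le[OF mW]) auto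
    also have "\<dots> = ennreal (2 * L) * (\<Sum>i. ennreal (diameter (U i) powr s0))" by simp
    finally have h1: "1 \<le> ennreal (2 * L) * (\<Sum>i. ennreal (diameter (U i) powr s0))" by simp
    have "ennreal (1 / (2 * L)) = ennreal (1 / (2 * L)) * 1" by simp
    also have "\<dots> \<le> ennreal (1 / (2 * L)) * (ennreal (2 * L) * (\<Sum>i. ennreal (diameter (U i) powr s0)))"
      by (rule mult_left_mono[OF h1]) simp
    also have "\<dots> = (ennreal (1 / (2 * L)) * ennreal (2 * L)) * (\<Sum>i. ennreal (diameter (U i) powr s0))"
      by (simp only: mult.assoc)
    also have "ennreal (1 / (2 * L)) * ennreal (2 * L) = 1"
      using L by (simp flip: ennreal_mult)
    also have "1 * (\<Sum>i. ennreal (diameter (U i) powr s0)) = (\<Sum>i. ennreal (diameter (U i) powr s0))" by simp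
    finally show "ennreal (1 / (2 * L)) \<le> (\<Sum>i. ennreal (diameter (U i) powr s0))" .
  qed
  have "hausdorff_pre s0 1 (S a) \<le> hausdorff_measure s0 (S a)"
    unfolding hausdorff_measure_def by (rule SUP_upper) simp
  moreover have "0 < ennreal (1 / (2 * L))" using L by simp
  ultimately show ?thesis using pre by auto
qed



lemma dim_S:
  fixes \<alpha> :: real
  assumes a: "1/2 < \<alpha>" "\<alpha> < 1 / sqrt 2"
  shows "hausdorff_dim (S \<alpha>) = - ln 2 / ln \<alpha>"
proof -
  define s0 where "s0 = - ln 2 / ln \<alpha>"
  have sq: "1 / sqrt 2 < (1::real)" by simp
  have a0: "0 < \<alpha>" "\<alpha> < 1" using a sq by linarith+
  have "\<alpha> ^ 2 < (1 / sqrt 2) ^ 2" using a a0 by (intro power_strict_mono) auto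
  then have a2: "\<alpha> ^ 2 < 1/2" by (simp add: power_divide)
  have ln0: "ln \<alpha> < 0" using a0 by simp
  have ln2: "- ln 2 < ln \<alpha>"
  proof -
    have "ln (1/2) < ln \<alpha>" using a a0 by (subst ln_less_cancel_iff) auto
    then show ?thesis by (simp add: ln_div)
  qed
  have s0gt: "1 < s0" unfolding s0_def by (subst less_divide_eq) (use ln0 ln2 in auto)
  have as0: "\<alpha> powr s0 = 1/2"
  proof -
    have "\<alpha> powr s0 = exp (s0 * ln \<alpha>)" using a0 by (simp add: powr_def)
    also have "s0 * ln \<alpha> = - ln 2" unfolding s0_def using ln0 by simp
    also have "exp (- ln 2) = (1/2::real)" by (simp add: exp_minus)
    finally show ?thesis .
  qed
  define T where "T = {s::real. 0 \<le> s \<and> hausdorff_measure s (S \<alpha>) = 0}"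
  have lb: "s0 \<le> s" if "s \<in> T" for s
  proof (rule ccontr)
    assume "\<not> s0 \<le> s"
    then have h2: "s \<le> s0" by simp
    have h1: "hausdorff_measure s (S \<alpha>) = 0" using that by (simp add: T_def)
    have "hausdorff_measure s0 (S \<alpha>) = 0" by (rule hmeasure_zero_mono[OF h1 h2])
    moreover have "hausdorff_measure s0 (S \<alpha>) \<noteq> 0"
      by (rule lower_bound[OF a0 a2 _ as0]) (use s0gt in simp)
    ultimately show False by simp
  qed
  have ub: "s \<in> T" if "s0 < s" for s
  proof -
    have "\<alpha> powr s < \<alpha> powr s0" by (rule powr_less_mono'[OF a0 that])
    then have "hausdorff_measure s (S \<alpha>) = 0"
      using as0 s0gt that by (intro upper_bound[OF a0]) auto
    then show ?thesis using that s0gt by (simp add: T_def)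
  qed
  have ne: "T \<noteq> {}" using ub[of "s0 + 1"] by auto
  have bdd: "bdd_below T" unfolding T_def by (rule bdd_belowI[of _ 0]) auto
  have i1: "s0 \<le> Inf T" by (rule cInf_greatest[OF ne lb])
  have i2: "Inf T \<le> s0"
  proof (rule ccontr)
    assume "\<not> Inf T \<le> s0"
    then have "s0 < (s0 + Inf T) / 2" "(s0 + Inf T) / 2 < Inf T" by auto
    then show False using cInf_lower[OF ub bdd, of "(s0 + Inf T) / 2"] by linarith
  qed
  show ?thesis unfolding hausdorff_dim_def T_def[symmetric] s0_def[symmetric] using i1 i2 by linarith
qed

theorem mainTheorem12:
  shows "(\<forall>\<alpha>::real. 1/2 < \<alpha> \<and> \<alpha> < 1 / sqrt 2 \<longrightarrow>
            hausdorff_dim (S \<alpha>) = - ln 2 / ln \<alpha>)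
       \<and> (\<forall>h::real. 1 < h \<and> h < 2 \<longrightarrow> hausdorff_dim (S (2 powr (-1/h))) = h)"
proof (intro conjI allI impI)
  fix \<alpha> :: real assume "1/2 < \<alpha> \<and> \<alpha> < 1 / sqrt 2"
  then show "hausdorff_dim (S \<alpha>) = - ln 2 / ln \<alpha>" using dim_S by blast
next
  fix h :: real assume h: "1 < h \<and> h < 2"
  define \<alpha> where "\<alpha> = (2::real) powr (-1/h)"
  have "(2::real) powr (-1) < 2 powr (-1/h)" using h by (intro powr_less_mono) (auto simp: field_simps)
  then have a1: "1/2 < \<alpha>" by (simp add: \<alpha>_def)
  have "(2::real) powr (-1/h) < 2 powr (-(1/2))" using h by (intro powr_less_mono) (auto simp: field_simps)
  also have "(2::real) powr (-(1/2)) = 1 / sqrt 2" by (simp add: powr_minus_divide powr_half_sqrt)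
  finally have a2: "\<alpha> < 1 / sqrt 2" by (simp add: \<alpha>_def)
  have "hausdorff_dim (S \<alpha>) = - ln 2 / ln \<alpha>" using dim_S a1 a2 by blast
  also have "ln \<alpha> = (-1/h) * ln 2" by (simp add: \<alpha>_def)
  also have "- ln 2 / ((-1/h) * ln 2) = h" using h by (simp add: field_simps)
  finally show "hausdorff_dim (S (2 powr (-1/h))) = h" by (simp add: \<alpha>_def)
qed


end
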